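(* Let $n$ be a positive integer. Then $\mathsf{D}_{\mathrm{cc}}^\rightarrow(\mathsf{OMB}_n \circ \mathsf{AND}) = \lceil\log(n + 1)\rceil$.
   Context: $\mathsf{OMB}_n:\{0,1\}^n\to\{0,1\}$ is defined by $\mathsf{OMB}_n(x)=1$ if $\max\{i\in[n]:x_i=0\}$ is odd and $0$ otherwise, with $\mathsf{OMB}_n(1^n)=0$. $f\circ\mathsf{AND}$ is the two-party function $(x,y)\mapsto f(x_1\wedge y_1,\dots,x_n\wedge y_n)$ (Alice holds $x$, Bob $y$), and $\mathsf{D}_{\mathrm{cc}}^\rightarrow$ is deterministic one-way communication complexity. Logarithms are base 2. *)

theory Defs
  imports Complex_Main
begin

text \<open>Bit strings of length n are lists of booleans of length n; the i-th bit
  x_i (1-based) is x ! (i - 1). Boolean value True encodes 1.\<close>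

definition OMB :: "bool list \<Rightarrow> bool" where
  "OMB x = (\<exists>i. 1 \<le> i \<and> i \<le> length x \<and> \<not> x ! (i - 1) \<and> odd i \<and>
                 (\<forall>j. i < j \<and> j \<le> length x \<longrightarrow> x ! (j - 1)))"

definition comp_AND :: "(bool list \<Rightarrow> bool) \<Rightarrow> bool list \<Rightarrow> bool list \<Rightarrow> bool" where
  "comp_AND f x y = f (map2 (\<and>) x y)"

definition D_cc_oneway :: "nat \<Rightarrow> (bool list \<Rightarrow> bool list \<Rightarrow> bool) \<Rightarrow> nat" where
  "D_cc_oneway n F = (LEAST c. \<exists>(m :: bool list \<Rightarrow> bool list) (B :: bool list \<Rightarrow> bool list \<Rightarrow> bool).
      (\<forall>x. length x = n \<longrightarrow> length (m x) = c) \<and>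
      (\<forall>x y. length x = n \<longrightarrow> length y = n \<longrightarrow> B (m x) y = F x y))"

end

theory Submission
  imports Defs
begin

fun lz :: "bool list \<Rightarrow> nat" where
  "lz [] = 0"
| "lz (b # xs) = (if lz xs > 0 then lz xs + 1 else if b then 0 else 1)"

lemma lz_prop:
  "(lz x = 0 \<longrightarrow> (\<forall>i<length x. x ! i)) \<and>
   (lz x > 0 \<longrightarrow> lz x \<le> length x \<and> \<not> x ! (lz x - 1) \<and> (\<forall>j. lz x \<le> j \<and> j < length x \<longrightarrow> x ! j))"
proof (induction x)
  case Nil
  then show ?case by simp
next
  case (Cons b xs)
  show ?case
  proof (cases "lz xs > 0")
    case True
    then show ?thesis using Cons
      by (auto simp: nth_Cons split: nat.splits)
  next
    case False
    then show ?thesis using Cons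
      by (auto simp: nth_Cons split: nat.splits)
  qed
qed

lemma lz_le: "lz x \<le> length x"
  using lz_prop[of x] by (cases "lz x = 0") auto

lemma lz_unique:
  assumes "0 < k" "k \<le> length x" "\<not> x ! (k - 1)" "\<forall>j. k \<le> j \<and> j < length x \<longrightarrow> x ! j"
  shows "lz x = k"
proof -
  have P: "lz x \<noteq> 0"
  proof
    assume "lz x = 0"
    then have "\<forall>i<length x. x ! i" using lz_prop[of x] by simp
    moreover have "k - 1 < length x" using assms by simp
    ultimately show False using assms(3) by blast
  qed
  then have Q: "\<not> x ! (lz x - 1)" "\<forall>j. lz x \<le> j \<and> j < length x \<longrightarrow> x ! j" "lz x \<le> length x"
    using lz_prop[of x] by auto
  show ?thesis
  proof (rule ccontr)
    assume "lz x \<noteq> k"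
    then consider "lz x < k" | "k < lz x" by linarith
    then show False
    proof cases
      case 1
      have "lz x \<le> k - 1" "k - 1 < length x" using 1 assms(1,2) by auto
      then have "x ! (k - 1)" using Q(2) by blast
      then show False using assms(3) by simp
    next
      case 2
      have "k \<le> lz x - 1" "lz x - 1 < length x" using 2 Q(3) by auto
      then have "x ! (lz x - 1)" using assms(4) by blast
      then show False using Q(1) by simp
    qed
  qed
qed

lemma lz_zero:
  assumes "\<forall>i<length x. x ! i" shows "lz x = 0"
proof (rule ccontr)
  assume "lz x \<noteq> 0"
  then have "\<not> x ! (lz x - 1)" "lz x \<le> length x" using lz_prop[of x] by auto
  moreover have "lz x - 1 < length x" using \<open>lz x \<noteq> 0\<close> \<open>lz x \<le> length x\<close> by simp
  ultimately show False using assms by blast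
qed

lemma OMB_lz: "OMB x = odd (lz x)"
proof (cases "lz x = 0")
  case True
  then have "\<forall>i<length x. x ! i" using lz_prop[of x] by auto
  have "\<not> OMB x"
  proof
    assume "OMB x"
    then obtain i where i: "1 \<le> i" "i \<le> length x" "\<not> x ! (i - 1)" unfolding OMB_def by blast
    then have "i - 1 < length x" by simp
    then show False using i(3) \<open>\<forall>i<length x. x ! i\<close> by blast
  qed
  then show ?thesis using True by simp
next
  case False
  have Q: "\<not> x ! (lz x - 1)" "\<forall>j. lz x \<le> j \<and> j < length x \<longrightarrow> x ! j" "lz x \<le> length x"
    using lz_prop[of x] False by auto
  show ?thesis
  proof
    assume "OMB x"
    then obtain i where i: "1 \<le> i" "i \<le> length x" "\<not> x ! (i - 1)" "odd i"
      "\<forall>j. i < j \<and> j \<le> length x \<longrightarrow> x ! (j - 1)" unfolding OMB_def by blast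
    have "lz x = i"
    proof (rule lz_unique)
      show "\<forall>j. i \<le> j \<and> j < length x \<longrightarrow> x ! j"
      proof (intro allI impI)
        fix j assume "i \<le> j \<and> j < length x"
        then show "x ! j" using i(5)[rule_format, of "j + 1"] by simp
      qed
    qed (use i in auto)
    then show "odd (lz x)" using i by simp
  next
    assume "odd (lz x)"
    then show "OMB x" unfolding OMB_def using Q False
      apply (intro exI[of _ "lz x"])
      apply (intro conjI allI impI)
      apply (simp_all add: Suc_le_eq)
      subgoal premises p for j
      proof -
        have "lz x \<le> j - 1" "j - 1 < length x" using p by auto
        then have "x ! (j - 1)" using Q(2) by blast
        then show ?thesis by simp
      qed
      done
  qed
qed

lemma lz_map2: "length x = length y \<Longrightarrow> lz (map2 (\<and>) x y) = max (lz x) (lz y)"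
  by (induction x y rule: list_induct2) auto

definition w :: "nat \<Rightarrow> nat \<Rightarrow> bool list" where
  "w n k = (if k = 0 then replicate n True else (replicate n True)[k - 1 := False])"

lemma w_len: "length (w n k) = n" by (simp add: w_def)

lemma lz_w: "k \<le> n \<Longrightarrow> lz (w n k) = k"
proof (cases "k = 0")
  case True then show ?thesis by (auto simp: w_def intro: lz_zero)
next
  case False
  assume "k \<le> n"
  show ?thesis
    apply (rule lz_unique) using False \<open>k \<le> n\<close> by (auto simp: w_def nth_list_update)
qed

lemma card_bool_lists: "card {xs :: bool list. length xs = c} = 2 ^ c"
  using card_lists_length_eq[of "UNIV :: bool set" c] by simp

lemma finite_bool_lists: "finite {xs :: bool list. length xs = c}"
  using finite_lists_length_eq[of "UNIV :: bool set" c] by simp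

lemma F_eq: "length x = n \<Longrightarrow> length y = n \<Longrightarrow> comp_AND OMB x y = odd (max (lz x) (lz y))"
  by (simp add: comp_AND_def OMB_lz lz_map2)

lemma lower:
  fixes m :: "bool list \<Rightarrow> bool list" and B :: "bool list \<Rightarrow> bool list \<Rightarrow> bool"
  assumes "\<forall>x. length x = n \<longrightarrow> length (m x) = c"
    and "\<forall>x y. length x = n \<longrightarrow> length y = n \<longrightarrow> B (m x) y = comp_AND OMB x y"
  shows "n + 1 \<le> 2 ^ c"
proof -
  have inj: "inj_on (\<lambda>k. m (w n k)) {..n}"
  proof (rule inj_onI)
    have key: "m (w n k) \<noteq> m (w n l)" if "k < l" "l \<le> n" for k l
    proof
      assume eq: "m (w n k) = m (w n l)"
      have "B (m (w n k)) (w n (l - 1)) = odd (max k (l - 1))"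
        using assms(2) F_eq w_len lz_w that by simp
      moreover have "B (m (w n l)) (w n (l - 1)) = odd (max l (l - 1))"
        using assms(2) F_eq w_len lz_w that by simp
      moreover have "max k (l - 1) = l - 1" "max l (l - 1) = l" using that by auto
      moreover have "odd (l - 1) \<noteq> odd l" using that by (cases l) auto
      ultimately show False using eq by simp
    qed
    fix k l assume kl: "k \<in> {..n}" "l \<in> {..n}" "m (w n k) = m (w n l)"
    then show "k = l" proof (cases k l rule: linorder_cases)
      case less then show ?thesis using key[of k l] kl by auto
    next
      case greater then show ?thesis using key[of l k] kl by auto
    qed
  qed
  have sub: "(\<lambda>k. m (w n k)) ` {..n} \<subseteq> {xs. length xs = c}"
    using assms(1) w_len by auto
  have "card ((\<lambda>k. m (w n k)) ` {..n}) = n + 1" using card_image[OF inj] by simp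
  then show ?thesis using card_mono[OF finite_bool_lists sub] card_bool_lists by simp
qed

lemma log_bound1:
  assumes "n + 1 \<le> (2::nat) ^ c"
  shows "nat \<lceil>log 2 (real n + 1)\<rceil> \<le> c"
proof -
  have "real n + 1 \<le> 2 ^ c" proof -
    have "real (n + 1) \<le> real (2 ^ c)" using assms by (simp only: of_nat_le_iff)
    then show ?thesis by simp
  qed
  then have "log 2 (real n + 1) \<le> log 2 (2 ^ c)" by (intro log_le_cancel_iff[THEN iffD2]) auto
  then have "log 2 (real n + 1) \<le> c" by (simp add: log_nat_power)
  then show ?thesis by (simp add: ceiling_le_iff nat_le_iff)
qed

lemma log_bound2: "n + 1 \<le> (2::nat) ^ (nat \<lceil>log 2 (real n + 1)\<rceil>)"
proof -
  let ?c = "nat \<lceil>log 2 (real n + 1)\<rceil>"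
  have "real n + 1 = 2 powr log 2 (real n + 1)" by simp
  also have "\<dots> \<le> 2 powr (real ?c)"
    by (intro powr_mono) (simp_all add: real_nat_ceiling_ge)
  also have "\<dots> = 2 ^ ?c" by (rule powr_realpow) simp
  finally have "real (n + 1) \<le> real (2 ^ ?c)" by simp
  then show ?thesis by (simp only: of_nat_le_iff)
qed

theorem claim4p7:
  fixes n :: nat
  assumes "n \<ge> 1"
  shows "D_cc_oneway n (comp_AND OMB) = nat \<lceil>log 2 (real n + 1)\<rceil>"
proof -
  let ?c = "nat \<lceil>log 2 (real n + 1)\<rceil>"
  have "card {..n} \<le> card {xs :: bool list. length xs = ?c}"
    using log_bound2[of n] card_bool_lists by simp
  then obtain f where f: "f ` {..n} \<subseteq> {xs :: bool list. length xs = ?c}" "inj_on f {..n}"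
    using card_le_inj[OF _ finite_bool_lists] by blast
  define m where "m x = f (lz x)" for x
  define B where "B msg y = odd (max (inv_into {..n} f msg) (lz y))" for msg y
  have ex: "\<exists>(m :: bool list \<Rightarrow> bool list) (B :: bool list \<Rightarrow> bool list \<Rightarrow> bool).
      (\<forall>x. length x = n \<longrightarrow> length (m x) = ?c) \<and>
      (\<forall>x y. length x = n \<longrightarrow> length y = n \<longrightarrow> B (m x) y = comp_AND OMB x y)"
  proof (intro exI conjI allI impI)
    fix x :: "bool list" assume "length x = n"
    then have "lz x \<in> {..n}" using lz_le[of x] by simp
    then show "length (m x) = ?c" using f m_def by auto
  next
    fix x y :: "bool list" assume "length x = n" "length y = n"
    then have "lz x \<in> {..n}" using lz_le[of x] by simp
    then show "B (m x) y = comp_AND OMB x y"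
      using f \<open>length x = n\<close> \<open>length y = n\<close> by (simp add: B_def m_def F_eq)
  qed
  show ?thesis unfolding D_cc_oneway_def
  proof (rule Least_equality)
    show "\<exists>(m :: bool list \<Rightarrow> bool list) (B :: bool list \<Rightarrow> bool list \<Rightarrow> bool). (\<forall>x. length x = n \<longrightarrow> length (m x) = ?c) \<and>
      (\<forall>x y. length x = n \<longrightarrow> length y = n \<longrightarrow> B (m x) y = comp_AND OMB x y)" using ex by blast
  next
    fix c assume "\<exists>(m :: bool list \<Rightarrow> bool list) (B :: bool list \<Rightarrow> bool list \<Rightarrow> bool).
      (\<forall>x. length x = n \<longrightarrow> length (m x) = c) \<and>
      (\<forall>x y. length x = n \<longrightarrow> length y = n \<longrightarrow> B (m x) y = comp_AND OMB x y)"
    then obtain m :: "bool list \<Rightarrow> bool list" and B :: "bool list \<Rightarrow> bool list \<Rightarrow> bool" where "\<forall>x. length x = n \<longrightarrow> length (m x) = c"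
      "\<forall>x y. length x = n \<longrightarrow> length y = n \<longrightarrow> B (m x) y = comp_AND OMB x y" by blast
    then show "?c \<le> c" using lower log_bound1 by blast
  qed
qed

end
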